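(* Let $K\ge2$, $a,b\ge1$ be integers. For any scheme with uncoded cache placement for the $(K,a,b)$ coded caching problem for location-based content, with load $R$, one has $$R\ \ge\ \frac{1}{a}\,\alpha_0+\frac{K-1}{2aK}\,\alpha_1 .$$
   Context: For integers $x\le y$, $[x:y]=\{x,x+1,\dots,y\}$ and $[n]=[1:n]$. For integers $c$ and $m\ge1$, $\langle c\rangle_m$ denotes the unique element of $\{1,\dots,m\}$ congruent to $c$ modulo $m$. The $(K,a,b)$ coded caching problem for location-based content: a server has $N=K(a+b)$ files $W_1,\dots,W_N$, each consisting of $B$ independent uniformly distributed bits. There are $K$ cache nodes, each storing $MB$ bits, and $K$ users, user $k$ having free access to cache node $k$ only. For $k\in[K]$ define $\mathcal D_{k,1}=[(k-1)(a+b)+1:ka+(k-1)b]$, $\mathcal D_{k,2}=[ka+(k-1)b+1:k(a+b)]$, $\mathcal D_{k,3}=\mathcal D_{\langle k+1\rangle_K,1}$, and $\mathcal D_k=\mathcal D_{k,1}\cup\mathcal D_{k,2}\cup\mathcal D_{k,3}$. A scheme consists of placement $Z_k=\phi_k(W_1,\dots,W_N)\in\{0,1\}^{MB}$ (fixed before demands), for each demand vector $\mathbf d\in\mathcal D_1\times\cdots\times\mathcal D_K$ a broadcast message $X=\psi(\mathbf d,W_1,\dots,W_N)\in\{0,1\}^{RB}$, and decoders such that user $k$ recovers $W_{d_k}$ exactly from $(\mathbf d,Z_k,X)$. The placement is uncoded if each $Z_k$ is a subset of the file bits copied directly. For uncoded placement, for $i\in[N]$ and $\mathcal T\subseteq[K]$,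 $W_{i,\mathcal T}$ denotes the set of bits of $W_i$ stored in exactly the cache nodes in $\mathcal T$ (and in no other cache node), and $|W_{i,\mathcal T}|$ its number of bits. Let $\mathcal C_1=\bigcup_{k\in[K]}\mathcal D_{k,1}$, and define $\alpha_0=\sum_{i\in\mathcal C_1}|W_{i,\emptyset}|/B$, $\alpha_1=\sum_{i\in\mathcal C_1}\sum_{j\in[K]}|W_{i,\{j\}}|/B$. *)

theory Defs
  imports Complex_Main
begin

text \<open>Cyclic index: the unique element of {1..m} congruent to c modulo m (c \<ge> 1, m \<ge> 1).\<close>
definition cyc :: "nat \<Rightarrow> nat \<Rightarrow> nat" where
  "cyc m c = ((c + m - 1) mod m) + 1"

definition D1 :: "nat \<Rightarrow> nat \<Rightarrow> nat \<Rightarrow> nat set" where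
  "D1 a b k = {(k-1)*(a+b)+1 .. k*a+(k-1)*b}"

definition D2 :: "nat \<Rightarrow> nat \<Rightarrow> nat \<Rightarrow> nat set" where
  "D2 a b k = {k*a+(k-1)*b+1 .. k*(a+b)}"

definition D3 :: "nat \<Rightarrow> nat \<Rightarrow> nat \<Rightarrow> nat \<Rightarrow> nat set" where
  "D3 K a b k = D1 a b (cyc K (k+1))"

definition Dem :: "nat \<Rightarrow> nat \<Rightarrow> nat \<Rightarrow> nat \<Rightarrow> nat set" where
  "Dem K a b k = D1 a b k \<union> D2 a b k \<union> D3 K a b k"

definition C1 :: "nat \<Rightarrow> nat \<Rightarrow> nat \<Rightarrow> nat set" where
  "C1 K a b = (\<Union>k\<in>{1..K}. D1 a b k)"

text \<open>A file library: file i (i \<in> [N]) is the bit string j \<mapsto> W i j, j < B.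
  Bits outside the library are normalized to False.\<close>
definition valid_files :: "nat \<Rightarrow> nat \<Rightarrow> (nat \<Rightarrow> nat \<Rightarrow> bool) \<Rightarrow> bool" where
  "valid_files N B W \<longleftrightarrow> (\<forall>i j. (i \<notin> {1..N} \<or> j \<ge> B) \<longrightarrow> \<not> W i j)"

text \<open>Uncoded placement: cache node k stores exactly the file bits at positions S k
  (pairs (file, bit index)). Its content is the restriction of the library to S k.\<close>
definition cache_content :: "(nat \<Rightarrow> (nat \<times> nat) set) \<Rightarrow> (nat \<Rightarrow> nat \<Rightarrow> bool) \<Rightarrow> nat \<Rightarrow> (nat \<times> nat \<Rightarrow> bool)" where
  "cache_content S W k = (\<lambda>p. if p \<in> S k then W (fst p) (snd p) else False)"

text \<open>A (zero-error) scheme with uncoded placement S, cache size M*B bits,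
  message length L bits (load R = L/B), encoder psi and decoders dec, for the
  (K,a,b) location-based coded caching problem with N = K(a+b) files of B bits.\<close>
definition uncoded_scheme ::
  "nat \<Rightarrow> nat \<Rightarrow> nat \<Rightarrow> nat \<Rightarrow> real \<Rightarrow> nat \<Rightarrow> (nat \<Rightarrow> (nat \<times> nat) set)
   \<Rightarrow> ((nat \<Rightarrow> nat) \<Rightarrow> (nat \<Rightarrow> nat \<Rightarrow> bool) \<Rightarrow> bool list)
   \<Rightarrow> (nat \<Rightarrow> (nat \<Rightarrow> nat) \<Rightarrow> (nat \<times> nat \<Rightarrow> bool) \<Rightarrow> bool list \<Rightarrow> nat \<Rightarrow> bool) \<Rightarrow> bool" where
  "uncoded_scheme K a b B M L S psi dec \<longleftrightarrow>
     (\<forall>k\<in>{1..K}. S k \<subseteq> {1..K*(a+b)} \<times> {..<B} \<and> real (card (S k)) \<le> M * real B) \<and>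
     (\<forall>d W. (\<forall>k\<in>{1..K}. d k \<in> Dem K a b k) \<longrightarrow> valid_files (K*(a+b)) B W \<longrightarrow>
        length (psi d W) = L \<and>
        (\<forall>k\<in>{1..K}. \<forall>j<B. dec k d (cache_content S W k) (psi d W) j = W (d k) j))"

text \<open>|W_{i,T}| for T = {} and T = {j}: number of bits of file i stored in no cache /
  exactly in cache j among caches 1..K.\<close>
definition bits_none :: "nat \<Rightarrow> nat \<Rightarrow> (nat \<Rightarrow> (nat \<times> nat) set) \<Rightarrow> nat \<Rightarrow> nat" where
  "bits_none K B S i = card {t. t < B \<and> (\<forall>k\<in>{1..K}. (i,t) \<notin> S k)}"

definition bits_only :: "nat \<Rightarrow> nat \<Rightarrow> (nat \<Rightarrow> (nat \<times> nat) set) \<Rightarrow> nat \<Rightarrow> nat \<Rightarrow> nat" where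
  "bits_only K B S i j = card {t. t < B \<and> (i,t) \<in> S j \<and> (\<forall>k\<in>{1..K}-{j}. (i,t) \<notin> S k)}"

definition alpha0 :: "nat \<Rightarrow> nat \<Rightarrow> nat \<Rightarrow> nat \<Rightarrow> (nat \<Rightarrow> (nat \<times> nat) set) \<Rightarrow> real" where
  "alpha0 K a b B S = (\<Sum>i\<in>C1 K a b. real (bits_none K B S i)) / real B"

definition alpha1 :: "nat \<Rightarrow> nat \<Rightarrow> nat \<Rightarrow> nat \<Rightarrow> (nat \<Rightarrow> (nat \<times> nat) set) \<Rightarrow> real" where
  "alpha1 K a b B S = (\<Sum>i\<in>C1 K a b. \<Sum>j\<in>{1..K}. real (bits_only K B S i j)) / real B"

end

theory Submission
  imports Defs
begin


definition FF :: "nat \<Rightarrow> nat \<Rightarrow> (nat \<Rightarrow> (nat \<times> nat) set) \<Rightarrow> (nat \<Rightarrow> nat) \<Rightarrow> (nat \<Rightarrow> nat) \<Rightarrow> (nat \<times> nat) set" where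
  "FF K B S d pos = {(d v, t) | v t. v \<in> {1..K} \<and> t < B \<and> (\<forall>w\<in>{1..K}. pos w \<le> pos v \<longrightarrow> (d v, t) \<notin> S w)}"

lemma core:
  assumes sch: "uncoded_scheme K a b B M L S psi dec"
    and dv: "\<forall>k\<in>{1..K}. d k \<in> Dem K a b k"
    and dr: "\<forall>k\<in>{1..K}. d k \<in> {1..K*(a+b)}"
    and K1: "K \<ge> 1" and B1: "B \<ge> 1"
  shows "card (FF K B S d pos) \<le> L"
proof -
  define F where "F = FF K B S d pos"
  have Fsub: "F \<subseteq> {1..K*(a+b)} \<times> {..<B}" using dr unfolding F_def FF_def by auto
  have finF: "finite F" by (rule finite_subset[OF Fsub]) auto
  define Wf where "Wf A = (\<lambda>i t. (i,t) \<in> A)" for A :: "(nat \<times> nat) set"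
  have valid: "valid_files (K*(a+b)) B (Wf A)" if "A \<subseteq> F" for A
    using that Fsub unfolding valid_files_def Wf_def by auto
  have dec_ok: "dec k d (cache_content S (Wf A) k) (psi d (Wf A)) j = Wf A (d k) j"
     and len: "length (psi d (Wf A)) = L"
    if "A \<subseteq> F" "k \<in> {1..K}" "j < B" for A k j
    using sch valid[OF that(1)] dv that(2,3) unfolding uncoded_scheme_def by blast+
  have inj: "inj_on (\<lambda>A. psi d (Wf A)) (Pow F)"
  proof (rule inj_onI)
    fix A A' assume A: "A \<in> Pow F" and A': "A' \<in> Pow F" and eq: "psi d (Wf A) = psi d (Wf A')"
    have P: "\<forall>t<B. Wf A (d v) t = Wf A' (d v) t" if "v \<in> {1..K}" for v
      using that
    proof (induction "pos v" arbitrary: v rule: less_induct)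
      case less
      have cc: "cache_content S (Wf A) v = cache_content S (Wf A') v"
      proof
        fix p
        show "cache_content S (Wf A) v p = cache_content S (Wf A') v p"
        proof (cases "p \<in> S v \<and> p \<in> F")
          case True
          then obtain w t where p: "p = (d w, t)" and w: "w \<in> {1..K}" "t < B"
            and nw: "\<forall>w'\<in>{1..K}. pos w' \<le> pos w \<longrightarrow> (d w, t) \<notin> S w'"
            unfolding F_def FF_def by blast
          have "pos w < pos v" using nw less.prems True p not_le by metis
          from less.hyps[OF this w(1)] w(2) p show ?thesis
            unfolding cache_content_def Wf_def by auto
        next
          case False
          then show ?thesis using A A' unfolding cache_content_def Wf_def by auto
        qed
      qed
      show ?case
      proof (intro allI impI)
        fix t assume t: "t < B"
        have "Wf A (d v) t = dec v d (cache_content S (Wf A) v) (psi d (Wf A)) t"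
          using dec_ok[of A v t] A less.prems t by auto
        also have "\<dots> = dec v d (cache_content S (Wf A') v) (psi d (Wf A')) t"
          using cc eq by simp
        also have "\<dots> = Wf A' (d v) t"
          using dec_ok[of A' v t] A' less.prems t by auto
        finally show "Wf A (d v) t = Wf A' (d v) t" .
      qed
    qed
    show "A = A'"
    proof (rule set_eqI)
      fix p
      show "p \<in> A \<longleftrightarrow> p \<in> A'"
      proof
        assume "p \<in> A"
        then have "p \<in> F" using A by auto
        then obtain v t where "p = (d v, t)" "v \<in> {1..K}" "t < B" unfolding F_def FF_def by blast
        then show "p \<in> A'" using P \<open>p \<in> A\<close> unfolding Wf_def by auto
      next
        assume "p \<in> A'"
        then have "p \<in> F" using A' by auto
        then obtain v t where "p = (d v, t)" "v \<in> {1..K}" "t < B" unfolding F_def FF_def by blast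
        then show "p \<in> A" using P \<open>p \<in> A'\<close> unfolding Wf_def by auto
      qed
    qed
  qed
  have img: "(\<lambda>A. psi d (Wf A)) ` Pow F \<subseteq> {xs. set xs \<subseteq> (UNIV::bool set) \<and> length xs = L}"
    using len[of _ 1 0] K1 B1 by auto
  have "card (Pow F) \<le> card {xs. set xs \<subseteq> (UNIV::bool set) \<and> length xs = L}"
    by (rule card_inj_on_le[OF inj img]) (use finite_lists_length_eq[of "UNIV::bool set" L] in simp)
  moreover have "card {xs. set xs \<subseteq> (UNIV::bool set) \<and> length xs = L} = 2 ^ L"
    using card_lists_length_eq[of "UNIV::bool set" L] by simp
  ultimately have "(2::nat) ^ card F \<le> 2 ^ L" by (simp add: card_Pow finF)
  then show ?thesis unfolding F_def by simp
qed


lemma mod_wrap: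
  fixes x K :: int
  assumes "K \<le> x" "x < 2*K"
  shows "x mod K = x - K"
proof -
  have "x mod K = ((x - K) + K) mod K" by simp
  also have "\<dots> = (x - K) mod K" by (rule mod_add_self2)
  also have "\<dots> = x - K" using assms by (intro mod_pos_pos_trivial) auto
  finally show ?thesis .
qed

lemma Tcount:
  fixes K e :: int
  assumes "0 < K" "0 \<le> e" "e < K"
  shows "card {x\<in>{0..<K}. (x+e) mod K > x} = nat (if e = 0 then 0 else K - e)"
proof (cases "e = 0")
  case True
  have h: "{x\<in>{0..<K}. (x+e) mod K > x} = {}" using True by (auto simp: mod_pos_pos_trivial)
  show ?thesis by (subst h) (use True in simp)
next
  case False
  have "{x\<in>{0..<K}. (x+e) mod K > x} = {0..<K-e}"
  proof (rule set_eqI, rule iffI)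
    fix x assume x: "x \<in> {x\<in>{0..<K}. (x+e) mod K > x}"
    show "x \<in> {0..<K-e}"
    proof (rule ccontr)
      assume "x \<notin> {0..<K-e}"
      then have "K \<le> x + e" "x + e < 2*K" using x assms by auto
      then have "(x+e) mod K = x + e - K"
        by (rule mod_wrap)
      then show False using x assms by auto
    qed
  next
    fix x assume "x \<in> {0..<K-e}"
    then show "x \<in> {x\<in>{0..<K}. (x+e) mod K > x}" using assms False by auto
  qed
  then show ?thesis using False by simp
qed

lemma card_shift:
  fixes K :: int and f :: "int \<Rightarrow> int"
  assumes "\<forall>s\<in>{0..<K}. f s \<in> {0..<K}" "inj_on f {0..<K}"
  shows "card {s\<in>{0..<K}. Q (f s)} = card {x\<in>{0..<K}. Q x}"
proof -
  have im: "f ` {0..<K} = {0..<K}" by (rule endo_inj_surj) (use assms in auto)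
  have "f ` {s\<in>{0..<K}. Q (f s)} = {x\<in>{0..<K}. Q x}"
  proof
    show "f ` {s\<in>{0..<K}. Q (f s)} \<subseteq> {x\<in>{0..<K}. Q x}" using assms(1) by auto
    show "{x\<in>{0..<K}. Q x} \<subseteq> f ` {s\<in>{0..<K}. Q (f s)}"
    proof
      fix x assume x: "x \<in> {x\<in>{0..<K}. Q x}"
      then obtain s where "s \<in> {0..<K}" "x = f s" using im by (metis (no_types, lifting) imageE mem_Collect_eq)
      then show "x \<in> f ` {s\<in>{0..<K}. Q (f s)}" using x by auto
    qed
  qed
  moreover have "inj_on f {s\<in>{0..<K}. Q (f s)}" by (rule inj_on_subset[OF assms(2)]) auto
  ultimately show ?thesis by (metis card_image)
qed

lemma inj1: "0 < (K::int) \<Longrightarrow> inj_on (\<lambda>s. (s - u) mod K) {0..<K}"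
proof (rule inj_onI)
  fix s s' assume K: "0 < K" and s: "s \<in> {0..<K}" "s' \<in> {0..<K}" and eq: "(s - u) mod K = (s' - u) mod K"
  have "s mod K = ((s - u) mod K + u) mod K" by (simp add: mod_add_left_eq)
  also have "\<dots> = ((s' - u) mod K + u) mod K" using eq by simp
  also have "\<dots> = s' mod K" by (simp add: mod_add_left_eq)
  finally show "s = s'" using s by (simp add: mod_pos_pos_trivial)
qed

lemma inj2: "0 < (K::int) \<Longrightarrow> inj_on (\<lambda>s. (c - s) mod K) {0..<K}"
proof (rule inj_onI)
  fix s s' assume K: "0 < K" and s: "s \<in> {0..<K}" "s' \<in> {0..<K}" and eq: "(c - s) mod K = (c - s') mod K"
  have "s mod K = (c - (c - s) mod K) mod K" by (simp add: mod_diff_right_eq)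
  also have "\<dots> = (c - (c - s') mod K) mod K" using eq by simp
  also have "\<dots> = s' mod K" by (simp add: mod_diff_right_eq)
  finally show "s = s'" using s by (simp add: mod_pos_pos_trivial)
qed

lemma count2:
  fixes K u j :: int
  assumes K: "0 < K"
  shows "card {s\<in>{0..<K}. (s-j) mod K > (s-u) mod K}
       + card {s\<in>{0..<K}. (j-s) mod K > (u-1-s) mod K} \<ge> nat (K - 1)"
proof -
  define e where "e = (u - j) mod K"
  define e' where "e' = (j - u + 1) mod K"
  have c1: "card {s\<in>{0..<K}. (s-j) mod K > (s-u) mod K} = card {x\<in>{0..<K}. (x+e) mod K > x}"
  proof -
    have "{s\<in>{0..<K}. (s-j) mod K > (s-u) mod K} = {s\<in>{0..<K}. ((s-u) mod K + e) mod K > (s-u) mod K}"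
    proof -
      have "((s-u) mod K + e) mod K = (s-j) mod K" for s
      proof -
        have "((s-u) mod K + e) mod K = ((s-u)+(u-j)) mod K" unfolding e_def by (rule mod_add_eq)
        then show ?thesis by simp
      qed
      then show ?thesis by simp
    qed
    also have "card \<dots> = card {x\<in>{0..<K}. (x+e) mod K > x}"
      by (rule card_shift[where f = "\<lambda>s. (s - u) mod K" and Q = "\<lambda>x. (x+e) mod K > x"])
         (use K inj1 in auto)
    finally show ?thesis .
  qed
  have c2: "card {s\<in>{0..<K}. (j-s) mod K > (u-1-s) mod K} = card {x\<in>{0..<K}. (x+e') mod K > x}"
  proof -
    have "{s\<in>{0..<K}. (j-s) mod K > (u-1-s) mod K} = {s\<in>{0..<K}. ((u-1-s) mod K + e') mod K > (u-1-s) mod K}"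
    proof -
      have "((u-1-s) mod K + e') mod K = (j-s) mod K" for s
      proof -
        have "((u-1-s) mod K + e') mod K = ((u-1-s)+(j-u+1)) mod K" unfolding e'_def by (rule mod_add_eq)
        then show ?thesis by simp
      qed
      then show ?thesis by simp
    qed
    also have "card \<dots> = card {x\<in>{0..<K}. (x+e') mod K > x}"
      by (rule card_shift[where f = "\<lambda>s. (u - 1 - s) mod K" and Q = "\<lambda>x. (x+e') mod K > x"])
         (use K inj2 in auto)
    finally show ?thesis .
  qed
  have e: "0 \<le> e" "e < K" "0 \<le> e'" "e' < K" unfolding e_def e'_def using K by auto
  have ee: "(e + e') mod K = 1 mod K"
  proof -
    have "(e + e') mod K = ((u-j)+(j-u+1)) mod K" unfolding e_def e'_def by (rule mod_add_eq)
    then show ?thesis by simp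
  qed
  show ?thesis unfolding c1 c2 Tcount[OF K e(1,2)] Tcount[OF K e(3,4)]
  proof -
    consider "e = 0" | "e' = 0" | "e \<noteq> 0" "e' \<noteq> 0" by blast
    then show "nat (K - 1) \<le> nat (if e = 0 then 0 else K - e) + nat (if e' = 0 then 0 else K - e')"
    proof cases
      case 1
      then have "e' = 1 mod K" using ee e by simp
      then show ?thesis using 1 K by (cases "K = 1") auto
    next
      case 2
      then have "e = 1 mod K" using ee e by simp
      then show ?thesis using 2 K by (cases "K = 1") auto
    next
      case 3
      have "e + e' = K + 1 \<or> e + e' = 1"
      proof (cases "e + e' < K")
        case True
        then have "e + e' = 1 mod K" using ee e by (simp add: mod_pos_pos_trivial)
        then show ?thesis using K e 3 by (cases "K = 1") (auto simp: mod_pos_pos_trivial)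
      next
        case False
        then have "(e + e') mod K = e + e' - K" using e by (intro mod_wrap) auto
        then have "e + e' - K = 1 mod K" using ee by simp
        moreover have "1 mod K = 1" using K e 3 by (intro mod_pos_pos_trivial) auto
        ultimately show ?thesis by auto
      qed
      then show ?thesis using 3 e by (auto simp: nat_add_distrib[symmetric])
    qed
  qed
qed


definition dmd :: "nat \<Rightarrow> nat \<Rightarrow> nat \<Rightarrow> bool \<Rightarrow> nat \<Rightarrow> nat \<Rightarrow> nat" where
  "dmd K a b c r v = (if c then (v-1)*(a+b)+r else (cyc K (v+1) - 1)*(a+b)+r)"

definition psn :: "nat \<Rightarrow> bool \<Rightarrow> int \<Rightarrow> nat \<Rightarrow> nat" where
  "psn K c s v = (if c then nat ((s - int v) mod int K) else nat ((int v - s) mod int K))"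

definition GG where
  "GG K a b B S c s r i t = (if (i,t) \<in> FF K B S (dmd K a b c r) (psn K c s) then 1 else (0::nat))"

lemma cyc_range: "K \<ge> 1 \<Longrightarrow> cyc K x \<in> {1..K}"
  unfolding cyc_def using pos_mod_bound[of K] by (auto simp: Suc_le_eq)

lemma D1_mem: "(u::nat) \<ge> 1 \<Longrightarrow> r \<in> {1..a} \<Longrightarrow> (u-1)*(a+b)+r \<in> D1 a b u"
proof -
  assume "u \<ge> 1" "r \<in> {1..a}"
  then obtain w where "u = Suc w" by (cases u) auto
  then show ?thesis using \<open>r \<in> {1..a}\<close> unfolding D1_def by (auto simp: algebra_simps)
qed

lemma D1_range: "(u::nat) \<in> {1..K} \<Longrightarrow> r \<in> {1..a} \<Longrightarrow> (u-1)*(a+b)+r \<in> {1..K*(a+b)}"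
proof -
  assume u: "u \<in> {1..K}" and r: "r \<in> {1..a}"
  then obtain w where w: "u = Suc w" "w < K" by (cases u) auto
  have "w*(a+b) + r \<le> w*(a+b) + (a+b)" using r by auto
  also have "\<dots> = Suc w * (a+b)" by simp
  also have "\<dots> \<le> K*(a+b)" using w by (intro mult_le_mono1) auto
  finally show ?thesis using w r by auto
qed

lemma dmd_ok:
  assumes "K \<ge> 1" "v \<in> {1..K}" "r \<in> {1..a}"
  shows "dmd K a b c r v \<in> Dem K a b v" "dmd K a b c r v \<in> {1..K*(a+b)}"
proof -
  have cr: "cyc K (v+1) \<in> {1..K}" using cyc_range assms(1) by blast
  show "dmd K a b c r v \<in> Dem K a b v"
    using D1_mem[of v r a b] D1_mem[of "cyc K (v+1)" r a b] assms cr
    unfolding dmd_def Dem_def D3_def by auto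
  show "dmd K a b c r v \<in> {1..K*(a+b)}"
    using D1_range[of v K r a b] D1_range[of "cyc K (v+1)" K r a b] assms cr
    unfolding dmd_def by auto
qed

lemma GG_one:
  assumes "v \<in> {1..K}" "dmd K a b c r v = i" "t < B"
    and "\<forall>w\<in>{1..K}. psn K c s w \<le> psn K c s v \<longrightarrow> (i,t) \<notin> S w"
  shows "GG K a b B S c s r i t = 1"
  using assms unfolding GG_def FF_def by auto

lemma sum_ge_card:
  fixes g :: "'a \<Rightarrow> nat"
  assumes "finite A" "\<And>x. x \<in> A \<Longrightarrow> P x \<Longrightarrow> g x \<ge> 1"
  shows "card {x\<in>A. P x} \<le> sum g A"
proof -
  have "card {x\<in>A. P x} = sum (\<lambda>_. 1) {x\<in>A. P x}" by simp
  also have "\<dots> \<le> sum g {x\<in>A. P x}" by (rule sum_mono) (use assms in auto)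
  also have "\<dots> \<le> sum g A" by (rule sum_mono2) (use assms in auto)
  finally show ?thesis .
qed

lemma per_bit:
  assumes K2: "K \<ge> 2" and i: "i \<in> C1 K a b" and t: "t < B"
  shows "2*K*(if \<forall>k\<in>{1..K}. (i,t) \<notin> S k then 1 else 0)
     + (K-1)*(\<Sum>j\<in>{1..K}. if (i,t) \<in> S j \<and> (\<forall>k\<in>{1..K}-{j}. (i,t) \<notin> S k) then 1 else 0)
     \<le> (\<Sum>c\<in>UNIV. \<Sum>s\<in>{0..<int K}. \<Sum>r\<in>{1..a}. GG K a b B S c s r i t)"
proof -
  obtain u where u: "u \<in> {1..K}" "i \<in> D1 a b u" using i unfolding C1_def by auto
  define r0 where "r0 = i - (u-1)*(a+b)"
  have r0: "r0 \<in> {1..a}" "i = (u-1)*(a+b) + r0"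
  proof -
    obtain w where w: "u = Suc w" using u by (cases u) auto
    show "r0 \<in> {1..a}" "i = (u-1)*(a+b) + r0" using u(2) unfolding r0_def D1_def w
      by (auto simp: algebra_simps)
  qed
  define v' where "v' = (if u = 1 then K else u - 1)"
  have v': "v' \<in> {1..K}" using u K2 unfolding v'_def by auto
  have cv: "cyc K (v'+1) = u"
  proof (cases "u = 1")
    case True then show ?thesis unfolding v'_def cyc_def using K2 by auto
  next
    case False
    then have e1: "v' + 1 + K - 1 = (u - 1) + K" and e2: "u - 1 < K" using u unfolding v'_def by auto
    have "(v' + 1 + K - 1) mod K = u - 1" unfolding e1 using e2 by simp
    then show ?thesis unfolding cyc_def using False u by simp
  qed
  have dT: "dmd K a b True r0 u = i" using r0 unfolding dmd_def by simp
  have dF: "dmd K a b False r0 v' = i" using r0 cv unfolding dmd_def by simp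
  have v'mod: "(int v' - s) mod int K = (int u - 1 - s) mod int K" for s
  proof (cases "u = 1")
    case True
    then have "int v' - s = (int u - 1 - s) + int K" unfolding v'_def by simp
    then show ?thesis by (simp only: mod_add_self2)
  next
    case False
    then show ?thesis using u unfolding v'_def by (simp add: of_nat_diff)
  qed
  define T where "T = (\<lambda>c. \<Sum>s\<in>{0..<int K}. GG K a b B S c s r0 i t)"
  have low: "T True + T False \<le> (\<Sum>c\<in>UNIV. \<Sum>s\<in>{0..<int K}. \<Sum>r\<in>{1..a}. GG K a b B S c s r i t)"
  proof -
    have "T c \<le> (\<Sum>s\<in>{0..<int K}. \<Sum>r\<in>{1..a}. GG K a b B S c s r i t)" for c
      unfolding T_def by (rule sum_mono) (rule member_le_sum, use r0 in auto)
    then have "T True + T False \<le> (\<Sum>c\<in>{True,False}. \<Sum>s\<in>{0..<int K}. \<Sum>r\<in>{1..a}. GG K a b B S c s r i t)"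
      by (simp add: add_mono)
    also have "{True,False} = (UNIV :: bool set)" by auto
    finally show ?thesis .
  qed
  consider (none) "\<forall>k\<in>{1..K}. (i,t) \<notin> S k"
    | (only) j where "j \<in> {1..K}" "(i,t) \<in> S j" "\<forall>k\<in>{1..K}-{j}. (i,t) \<notin> S k"
    | (neither) "\<not> (\<forall>k\<in>{1..K}. (i,t) \<notin> S k)" "\<forall>j\<in>{1..K}. \<not> ((i,t) \<in> S j \<and> (\<forall>k\<in>{1..K}-{j}. (i,t) \<notin> S k))"
    by blast
  then show ?thesis
  proof cases
    case none
    have "T c = K" for c
    proof -
      have "GG K a b B S c s r0 i t = 1" for s
        using GG_one[OF u(1) dT t, where S=S and s=s] GG_one[OF v' dF t, where S=S and s=s] none u(1) v'
        by (cases c) auto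
      then show ?thesis unfolding T_def by simp
    qed
    moreover have "(\<Sum>j\<in>{1..K}. if (i,t) \<in> S j \<and> (\<forall>k\<in>{1..K}-{j}. (i,t) \<notin> S k) then 1 else 0) = (0::nat)"
      using none by (intro sum.neutral) auto
    ultimately show ?thesis using low none by simp
  next
    case (only j)
    have sj: "(\<Sum>j'\<in>{1..K}. if (i,t) \<in> S j' \<and> (\<forall>k\<in>{1..K}-{j'}. (i,t) \<notin> S k) then 1 else 0) = (1::nat)"
    proof -
      have "(\<Sum>j'\<in>{1..K}. if (i,t) \<in> S j' \<and> (\<forall>k\<in>{1..K}-{j'}. (i,t) \<notin> S k) then 1 else (0::nat))
          = (\<Sum>j'\<in>{1..K}. if j' = j then 1 else 0)"
        by (rule sum.cong) (use only in auto)
      also have "\<dots> = 1" using only(1) by simp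
      finally show ?thesis .
    qed
    have nn: "\<not> (\<forall>k\<in>{1..K}. (i,t) \<notin> S k)" using only by auto
    have cT: "card {s\<in>{0..<int K}. (s - int j) mod int K > (s - int u) mod int K} \<le> T True"
      unfolding T_def
    proof (rule sum_ge_card, simp)
      fix s assume "s \<in> {0..<int K}" and lt: "(s - int j) mod int K > (s - int u) mod int K"
      have h0: "0 \<le> (s - int u) mod int K" using K2 by simp
      have "psn K True s j > psn K True s u" unfolding psn_def
        using nat_less_eq_zless[OF h0, of "(s - int j) mod int K"] lt by simp
      then have "GG K a b B S True s r0 i t = 1"
        by (intro GG_one[OF u(1) dT t]) (use only in \<open>auto simp: not_le[symmetric]\<close>)
      then show "1 \<le> GG K a b B S True s r0 i t" by simp
    qed
    have cF: "card {s\<in>{0..<int K}. (int j - s) mod int K > (int u - 1 - s) mod int K} \<le> T False"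
      unfolding T_def
    proof (rule sum_ge_card, simp)
      fix s assume "s \<in> {0..<int K}" and lt: "(int j - s) mod int K > (int u - 1 - s) mod int K"
      have h0: "0 \<le> (int u - 1 - s) mod int K" using K2 by simp
      have "psn K False s j > psn K False s v'" unfolding psn_def v'mod
        using nat_less_eq_zless[OF h0, of "(int j - s) mod int K"] lt by simp
      then have "GG K a b B S False s r0 i t = 1"
        by (intro GG_one[OF v' dF t]) (use only in \<open>auto simp: not_le[symmetric]\<close>)
      then show "1 \<le> GG K a b B S False s r0 i t" by simp
    qed
    have "nat (int K - 1) \<le> T True + T False"
      using count2[of "int K" "int u" "int j"] cT cF K2 by linarith
    moreover have "nat (int K - 1) = K - 1" by (cases K) auto
    ultimately have "K - 1 \<le> (\<Sum>c\<in>UNIV. \<Sum>s\<in>{0..<int K}. \<Sum>r\<in>{1..a}. GG K a b B S c s r i t)"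
      using low by linarith
    then show ?thesis using nn sj by auto
  next
    case neither
    have "(\<Sum>j\<in>{1..K}. if (i,t) \<in> S j \<and> (\<forall>k\<in>{1..K}-{j}. (i,t) \<notin> S k) then 1 else 0) = (0::nat)"
      using neither by (intro sum.neutral) auto
    then show ?thesis using neither by auto
  qed
qed


lemma C1_sub: "C1 K a b \<subseteq> {1..K*(a+b)}"
proof
  fix i assume "i \<in> C1 K a b"
  then obtain u where u: "u \<in> {1..K}" "i \<in> D1 a b u" unfolding C1_def by auto
  then obtain w where w: "u = Suc w" "w < K" by (cases u) auto
  have "i \<le> w*(a+b) + a" using u(2) w unfolding D1_def by (auto simp: algebra_simps)
  also have "\<dots> \<le> Suc w * (a+b)" by simp
  also have "\<dots> \<le> K*(a+b)" using w by (intro mult_le_mono1) auto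
  finally show "i \<in> {1..K*(a+b)}" using u(2) unfolding D1_def by auto
qed

lemma finC1: "finite (C1 K a b)" by (rule finite_subset[OF C1_sub]) auto

lemma card_as_sum: "card {t. t < (B::nat) \<and> P t} = (\<Sum>t<B. if P t then 1 else (0::nat))"
proof -
  have "{t. t < B \<and> P t} = {t\<in>{..<B}. P t}" by auto
  then have "card {t. t < B \<and> P t} = (\<Sum>t\<in>{t\<in>{..<B}. P t}. 1)" by simp
  also have "\<dots> = (\<Sum>t<B. if P t then 1 else (0::nat))"
    by (rule sum.inter_filter) simp
  finally show ?thesis .
qed

lemma swap3:
  "(\<Sum>i\<in>A. \<Sum>t\<in>B. \<Sum>c\<in>X. h i t c) = (\<Sum>c\<in>X. \<Sum>i\<in>A. \<Sum>t\<in>B. h i t c)"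
proof -
  have "(\<Sum>i\<in>A. \<Sum>t\<in>B. \<Sum>c\<in>X. h i t c) = (\<Sum>i\<in>A. \<Sum>c\<in>X. \<Sum>t\<in>B. h i t c)"
    by (rule sum.cong[OF refl]) (rule sum.swap)
  also have "\<dots> = (\<Sum>c\<in>X. \<Sum>i\<in>A. \<Sum>t\<in>B. h i t c)" by (rule sum.swap)
  finally show ?thesis .
qed

lemma swap5:
  "(\<Sum>i\<in>A. \<Sum>t\<in>B. \<Sum>c\<in>X. \<Sum>s\<in>Y. \<Sum>r\<in>Z. f c s r i t)
   = (\<Sum>c\<in>X. \<Sum>s\<in>Y. \<Sum>r\<in>Z. \<Sum>i\<in>A. \<Sum>t\<in>B. f c s r i t)"
proof -
  have "(\<Sum>i\<in>A. \<Sum>t\<in>B. \<Sum>c\<in>X. \<Sum>s\<in>Y. \<Sum>r\<in>Z. f c s r i t)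
      = (\<Sum>c\<in>X. \<Sum>i\<in>A. \<Sum>t\<in>B. \<Sum>s\<in>Y. \<Sum>r\<in>Z. f c s r i t)" by (rule swap3)
  also have "\<dots> = (\<Sum>c\<in>X. \<Sum>s\<in>Y. \<Sum>i\<in>A. \<Sum>t\<in>B. \<Sum>r\<in>Z. f c s r i t)"
    by (rule sum.cong[OF refl]) (rule swap3)
  also have "\<dots> = (\<Sum>c\<in>X. \<Sum>s\<in>Y. \<Sum>r\<in>Z. \<Sum>i\<in>A. \<Sum>t\<in>B. f c s r i t)"
    by (rule sum.cong[OF refl], rule sum.cong[OF refl]) (rule swap3)
  finally show ?thesis .
qed

lemma mainnat:
  assumes K2: "K \<ge> 2" and a1: "a \<ge> 1" and B1: "B \<ge> 1"
    and sch: "uncoded_scheme K a b B M L S psi dec"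
  shows "2*K*(\<Sum>i\<in>C1 K a b. bits_none K B S i) + (K-1)*(\<Sum>i\<in>C1 K a b. \<Sum>j\<in>{1..K}. bits_only K B S i j)
       \<le> 2*a*K*L"
proof -
  define C where "C = C1 K a b"
  have finC: "finite C" unfolding C_def by (rule finC1)
  define nn where "nn i t = (if \<forall>k\<in>{1..K}. (i,t) \<notin> S k then 1 else (0::nat))" for i t
  define oo where "oo i t j = (if (i,t) \<in> S j \<and> (\<forall>k\<in>{1..K}-{j}. (i,t) \<notin> S k) then 1 else (0::nat))" for i t j
  have bn: "bits_none K B S i = (\<Sum>t<B. nn i t)" for i
    unfolding bits_none_def nn_def by (rule card_as_sum)
  have bo: "bits_only K B S i j = (\<Sum>t<B. oo i t j)" for i j
    unfolding bits_only_def oo_def by (rule card_as_sum)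
  define H where "H c s r = (\<Sum>i\<in>C. \<Sum>t<B. GG K a b B S c s r i t)" for c s r
  have Hle: "H c s r \<le> L" if r: "r \<in> {1..a}" for c s r
  proof -
    define F where "F = FF K B S (dmd K a b c r) (psn K c s)"
    have finF: "finite F"
    proof -
      have "F \<subseteq> (\<lambda>(v,t). (dmd K a b c r v, t)) ` ({1..K} \<times> {..<B})"
        unfolding F_def FF_def by auto
      then show ?thesis by (rule finite_subset) auto
    qed
    have "H c s r = (\<Sum>p\<in>C \<times> {..<B}. if p \<in> F then 1 else 0)"
      unfolding H_def GG_def F_def by (simp add: sum.cartesian_product case_prod_beta)
    also have "\<dots> = card {p\<in>C \<times> {..<B}. p \<in> F}"
      using finC by (simp add: sum.inter_filter[symmetric])
    also have "\<dots> \<le> card F" by (rule card_mono[OF finF]) auto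
    also have "\<dots> \<le> L" unfolding F_def
      by (rule core[OF sch]) (use dmd_ok r K2 B1 in auto)
    finally show ?thesis .
  qed
  have "(\<Sum>i\<in>C. \<Sum>t<B. 2*K*nn i t + (K-1)*(\<Sum>j\<in>{1..K}. oo i t j))
     \<le> (\<Sum>i\<in>C. \<Sum>t<B. \<Sum>c\<in>UNIV. \<Sum>s\<in>{0..<int K}. \<Sum>r\<in>{1..a}. GG K a b B S c s r i t)"
    unfolding nn_def oo_def
    by (intro sum_mono per_bit[OF K2]) (auto simp: C_def)
  also have "\<dots> = (\<Sum>c\<in>UNIV. \<Sum>s\<in>{0..<int K}. \<Sum>r\<in>{1..a}. H c s r)"
    unfolding H_def by (rule swap5)
  also have "\<dots> \<le> (\<Sum>c\<in>(UNIV::bool set). \<Sum>s\<in>{0..<int K}. \<Sum>r\<in>{1..a}. L)"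
    by (intro sum_mono Hle) auto
  also have "\<dots> = 2*a*K*L" by simp
  finally have main: "(\<Sum>i\<in>C. \<Sum>t<B. 2*K*nn i t + (K-1)*(\<Sum>j\<in>{1..K}. oo i t j)) \<le> 2*a*K*L" .
  have "(\<Sum>i\<in>C. \<Sum>t<B. 2*K*nn i t + (K-1)*(\<Sum>j\<in>{1..K}. oo i t j))
      = 2*K*(\<Sum>i\<in>C. bits_none K B S i) + (K-1)*(\<Sum>i\<in>C. \<Sum>j\<in>{1..K}. bits_only K B S i j)"
  proof -
    have "(\<Sum>i\<in>C. \<Sum>t<B. 2*K*nn i t + (K-1)*(\<Sum>j\<in>{1..K}. oo i t j))
        = (\<Sum>i\<in>C. 2*K*(\<Sum>t<B. nn i t) + (K-1)*(\<Sum>t<B. \<Sum>j\<in>{1..K}. oo i t j))"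
      by (simp add: sum.distrib sum_distrib_left)
    also have "\<dots> = (\<Sum>i\<in>C. 2*K*(\<Sum>t<B. nn i t) + (K-1)*(\<Sum>j\<in>{1..K}. \<Sum>t<B. oo i t j))"
      by (rule sum.cong[OF refl]) (simp only: sum.swap[of _ "{..<B}"])
    also have "\<dots> = 2*K*(\<Sum>i\<in>C. bits_none K B S i) + (K-1)*(\<Sum>i\<in>C. \<Sum>j\<in>{1..K}. bits_only K B S i j)"
      unfolding bn bo by (simp add: sum.distrib sum_distrib_left)
    finally show ?thesis .
  qed
  then show ?thesis using main unfolding C_def by simp
qed

theorem mainTheorem7:
  fixes K a b B L :: nat and M :: real
    and S :: "nat \<Rightarrow> (nat \<times> nat) set"
    and psi :: "(nat \<Rightarrow> nat) \<Rightarrow> (nat \<Rightarrow> nat \<Rightarrow> bool) \<Rightarrow> bool list"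
    and dec :: "nat \<Rightarrow> (nat \<Rightarrow> nat) \<Rightarrow> (nat \<times> nat \<Rightarrow> bool) \<Rightarrow> bool list \<Rightarrow> nat \<Rightarrow> bool"
  assumes "K \<ge> 2" and "a \<ge> 1" and "b \<ge> 1" and "B \<ge> 1"
    and "uncoded_scheme K a b B M L S psi dec"
  shows "real L / real B \<ge> alpha0 K a b B S / real a
           + real (K - 1) / (2 * real a * real K) * alpha1 K a b B S"
proof -
  define A0 where "A0 = (\<Sum>i\<in>C1 K a b. bits_none K B S i)"
  define A1 where "A1 = (\<Sum>i\<in>C1 K a b. \<Sum>j\<in>{1..K}. bits_only K B S i j)"
  have n: "2*K*A0 + (K-1)*A1 \<le> 2*a*K*L"
    unfolding A0_def A1_def by (rule mainnat[OF assms(1,2,4,5)])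
  have r: "2*real K*real A0 + real (K-1)*real A1 \<le> 2*real a*real K*real L"
  proof -
    have "real (2*K*A0 + (K-1)*A1) \<le> real (2*a*K*L)" using n by (simp only: of_nat_le_iff)
    then show ?thesis by (simp only: of_nat_add of_nat_mult of_nat_numeral)
  qed
  have a0: "alpha0 K a b B S = real A0 / real B"
    unfolding alpha0_def A0_def by simp
  have a1: "alpha1 K a b B S = real A1 / real B"
    unfolding alpha1_def A1_def by simp
  have pos: "real a > 0" "real K > 0" "real B > 0" using assms by auto
  have "alpha0 K a b B S / real a + real (K - 1) / (2 * real a * real K) * alpha1 K a b B S
      = (2*real K*real A0 + real (K-1)*real A1) / (2*real a*real K*real B)"
    unfolding a0 a1 using pos by (simp add: divide_simps)
  also have "\<dots> \<le> (2*real a*real K*real L) / (2*real a*real K*real B)"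
    by (rule divide_right_mono[OF r]) (use pos in simp)
  also have "\<dots> = real L / real B" using pos by simp
  finally show ?thesis .
qed

end
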